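(* Let $\mathcal{H}_A,\mathcal{H}_B$ have finite dimensions $d_A,d_B$, and put $d=\min\{d_A,d_B\}$, $D=\max\{d_A,d_B\}$. Let $\rho$ be a separable state on $\mathcal{H}_A\otimes\mathcal{H}_B$ in Filter Normal Form, and let $h$ be an integer with $\sqrt{Dd}\le h\le d^2$. Then $$\mathcal{M}_{h,p=\infty}(\rho)\le\frac{1}{\sqrt{Dd}}\left[\frac{D-1}{D(h-1)}\cdot\frac{d-1}{d(h-1)}\right]^{\frac{h-1}{2}}.$$
   Context: Let $\{A_i\}_{i=1}^{d_A^2}$ be an orthonormal basis of the real vector space of $d_A\times d_A$ Hermitian matrices w.r.t. the Hilbert–Schmidt inner product $\mathrm{tr}(XY)$, and $\{B_j\}_{j=1}^{d_B^2}$ likewise for $d_B\times d_B$. The correlation matrix of a state $\rho$ is $\mathcal{C}_{ij}=\mathrm{tr}(\rho\,A_i\otimes B_j)$, with singular values $\sigma_1\ge\cdots\ge\sigma_{d^2}\ge0$ (independent of the choice of bases). $\mathcal{M}_{h,p=\infty}(\rho)$ is the Schatten $\infty$-norm (largest singular value) of the $h$-th compound matrix of $\mathcal{C}$, i.e. $\mathcal{M}_{h,\infty}(\rho)=\prod_{k=1}^h\sigma_k$. A state is separable if it is a convex combination of product states. A state $\rho$ is in Filter Normal Form if $\mathrm{tr}(\rho\,(A\otimes\mathbb{1}))=0$ for every traceless Hermitian $A$ on $\mathcal{H}_A$ and $\mathrm{tr}(\rho\,(\mathbb{1}\otimes B))=0$ for every traceless Hermitian $B$ on $\mathcal{H}_B$.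 *)

theory Defs
  imports Complex_Main "Jordan_Normal_Form.Matrix"
begin

definition mtrace :: "complex mat \<Rightarrow> complex" where
  "mtrace M = (\<Sum>i<dim_row M. M $$ (i, i))"

definition herm_mat :: "nat \<Rightarrow> complex mat \<Rightarrow> bool" where
  "herm_mat n M \<longleftrightarrow> M \<in> carrier_mat n n \<and>
     (\<forall>i<n. \<forall>j<n. M $$ (i, j) = cnj (M $$ (j, i)))"

(* Kronecker (tensor) product A \<otimes> B of a dA x dA and a dB x dB matrix;
   basis index of H_A \<otimes> H_B: a * dB + b *)
definition kron :: "nat \<Rightarrow> nat \<Rightarrow> complex mat \<Rightarrow> complex mat \<Rightarrow> complex mat" where
  "kron dA dB A B = mat (dA * dB) (dA * dB)
     (\<lambda>(i, j). A $$ (i div dB, j div dB) * B $$ (i mod dB, j mod dB))"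

definition state :: "nat \<Rightarrow> complex mat \<Rightarrow> bool" where
  "state n \<rho> \<longleftrightarrow> herm_mat n \<rho> \<and>
     (\<forall>v :: nat \<Rightarrow> complex. 0 \<le> Re (\<Sum>i<n. \<Sum>j<n. cnj (v i) * \<rho> $$ (i, j) * v j)) \<and>
     mtrace \<rho> = 1"

definition separable :: "nat \<Rightarrow> nat \<Rightarrow> complex mat \<Rightarrow> bool" where
  "separable dA dB \<rho> \<longleftrightarrow> state (dA * dB) \<rho> \<and>
     (\<exists>(m::nat) (p::nat \<Rightarrow> real) \<sigma>A \<sigma>B.
        (\<forall>k<m. 0 \<le> p k \<and> state dA (\<sigma>A k) \<and> state dB (\<sigma>B k)) \<and>
        (\<Sum>k<m. p k) = 1 \<and>
        (\<forall>i<dA * dB. \<forall>j<dA * dB.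
           \<rho> $$ (i, j) = (\<Sum>k<m. complex_of_real (p k) * kron dA dB (\<sigma>A k) (\<sigma>B k) $$ (i, j))))"

definition filter_normal_form :: "nat \<Rightarrow> nat \<Rightarrow> complex mat \<Rightarrow> bool" where
  "filter_normal_form dA dB \<rho> \<longleftrightarrow>
     (\<forall>A. herm_mat dA A \<and> mtrace A = 0 \<longrightarrow> mtrace (\<rho> * kron dA dB A (1\<^sub>m dB)) = 0) \<and>
     (\<forall>B. herm_mat dB B \<and> mtrace B = 0 \<longrightarrow> mtrace (\<rho> * kron dA dB (1\<^sub>m dA) B) = 0)"

(* orthonormal basis (indices 0..n^2-1) of the real space of n x n Hermitian matrices
   w.r.t. the Hilbert-Schmidt inner product tr(XY); n^2 orthonormal elements of an
   n^2-dimensional space form a basis *)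
definition herm_onb :: "nat \<Rightarrow> (nat \<Rightarrow> complex mat) \<Rightarrow> bool" where
  "herm_onb n E \<longleftrightarrow> (\<forall>i<n^2. herm_mat n (E i)) \<and>
     (\<forall>i<n^2. \<forall>j<n^2. mtrace (E i * E j) = (if i = j then 1 else 0))"

definition corr_mat :: "nat \<Rightarrow> nat \<Rightarrow> (nat \<Rightarrow> complex mat) \<Rightarrow> (nat \<Rightarrow> complex mat)
    \<Rightarrow> complex mat \<Rightarrow> real mat" where
  "corr_mat dA dB EA EB \<rho> = mat (dA^2) (dB^2)
     (\<lambda>(i, j). Re (mtrace (\<rho> * kron dA dB (EA i) (EB j))))"

definition orthogonal_mat :: "nat \<Rightarrow> real mat \<Rightarrow> bool" where
  "orthogonal_mat n U \<longleftrightarrow> U \<in> carrier_mat n n \<and> transpose_mat U * U = 1\<^sub>m n"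

definition singular_values :: "real mat \<Rightarrow> real list \<Rightarrow> bool" where
  "singular_values C s \<longleftrightarrow>
     length s = min (dim_row C) (dim_col C) \<and> (\<forall>x \<in> set s. 0 \<le> x) \<and>
     sorted_wrt (\<ge>) s \<and>
     (\<exists>U V. orthogonal_mat (dim_row C) U \<and> orthogonal_mat (dim_col C) V \<and>
        C = U * mat (dim_row C) (dim_col C) (\<lambda>(i, j). if i = j then s ! i else 0)
              * transpose_mat V)"

definition M_h_inf :: "nat \<Rightarrow> real list \<Rightarrow> real" where
  "M_h_inf h s = (\<Prod>k<h. s ! k)"

end

theory Submission
  imports Defs "HOL-Analysis.Convex" "Jordan_Normal_Form.Determinant"
begin

lemma sum_divmod:
  fixes g :: "nat \<Rightarrow> nat \<Rightarrow> 'a::comm_monoid_add"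
  assumes "b > 0"
  shows "(\<Sum>i<a*b. g (i div b) (i mod b)) = (\<Sum>x<a. \<Sum>y<b. g x y)"
proof (induction a)
  case 0 then show ?case by simp
next
  case (Suc a)
  have "(\<Sum>i<Suc a*b. g (i div b) (i mod b)) = (\<Sum>i<a*b. g (i div b) (i mod b)) + (\<Sum>i\<in>{a*b..<a*b+b}. g (i div b) (i mod b))"
    by (simp add: add.commute sum.atLeastLessThan_concat lessThan_atLeast0
        flip: sum.atLeastLessThan_concat[of 0 "a*b" "a*b+b"])
  also have "(\<Sum>i\<in>{a*b..<a*b+b}. g (i div b) (i mod b)) = (\<Sum>y<b. g a y)"
  proof -
    have "(\<Sum>i\<in>{a*b..<a*b+b}. g (i div b) (i mod b)) = (\<Sum>y\<in>{0..<b}. g ((y + a*b) div b) ((y+a*b) mod b))"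
      using sum.shift_bounds_nat_ivl[of "\<lambda>i. g (i div b) (i mod b)" 0 "a*b" b] by (simp add: add.commute)
    also have "\<dots> = (\<Sum>y<b. g a y)" using assms
      by (intro sum.cong) (auto simp: lessThan_atLeast0)
    finally show ?thesis .
  qed
  finally show ?case using Suc by simp
qed

lemma ortho_flip:
  fixes Q :: "nat \<Rightarrow> nat \<Rightarrow> real"
  assumes "\<And>i j. i < N \<Longrightarrow> j < N \<Longrightarrow> (\<Sum>c<N. Q c i * Q c j) = (if i = j then 1 else 0)"
  shows "\<And>c c'. c < N \<Longrightarrow> c' < N \<Longrightarrow> (\<Sum>i<N. Q c i * Q c' i) = (if c = c' then 1 else 0)"
proof -
  define A where "A = mat N N (\<lambda>(c,i). Q c i)"
  have A: "A \<in> carrier_mat N N" "transpose_mat A \<in> carrier_mat N N" unfolding A_def by auto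
  have "transpose_mat A * A = 1\<^sub>m N"
    by (rule eq_matI) (auto simp: A_def scalar_prod_def assms lessThan_atLeast0[symmetric] intro!: sum.cong)
  from mat_mult_left_right_inverse[OF A(2) A(1) this] have AA: "A * transpose_mat A = 1\<^sub>m N" .
  fix c c' assume cc: "c < N" "c' < N"
  have "(A * transpose_mat A) $$ (c, c') = (\<Sum>i<N. Q c i * Q c' i)"
    using cc by (auto simp: A_def scalar_prod_def lessThan_atLeast0 intro!: sum.cong)
  then show "(\<Sum>i<N. Q c i * Q c' i) = (if c = c' then 1 else 0)" using AA cc by simp
qed

lemma parseval_gen:
  fixes Q :: "nat \<Rightarrow> nat \<Rightarrow> real"
  assumes "\<And>c c'. c < N \<Longrightarrow> c' < N \<Longrightarrow> (\<Sum>i<N. Q c i * Q c' i) = (if c = c' then 1 else 0)"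
  shows "(\<Sum>i<N. (\<Sum>c<N. x c * Q c i) * (\<Sum>c<N. y c * Q c i)) = (\<Sum>c<N. x c * y c)"
proof -
  have "(\<Sum>i<N. (\<Sum>c<N. x c * Q c i) * (\<Sum>c<N. y c * Q c i))
     = (\<Sum>i<N. \<Sum>c<N. \<Sum>c'<N. x c * y c' * (Q c i * Q c' i))"
    by (rule sum.cong[OF refl], simp add: sum_product mult_ac)
  also have "\<dots> = (\<Sum>c<N. \<Sum>i<N. \<Sum>c'<N. x c * y c' * (Q c i * Q c' i))"
    by (rule sum.swap)
  also have "\<dots> = (\<Sum>c<N. \<Sum>c'<N. \<Sum>i<N. x c * y c' * (Q c i * Q c' i))"
    by (rule sum.cong[OF refl], rule sum.swap)
  also have "\<dots> = (\<Sum>c<N. \<Sum>c'<N. x c * y c' * (\<Sum>i<N. Q c i * Q c' i))"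
    by (simp add: sum_distrib_left)
  also have "\<dots> = (\<Sum>c<N. \<Sum>c'<N. if c' = c then x c * y c else 0)"
    by (intro sum.cong refl) (auto simp: assms)
  also have "\<dots> = (\<Sum>c<N. x c * y c)" by simp
  finally show ?thesis .
qed

lemma cs_abs:
  fixes x y :: "nat \<Rightarrow> real"
  shows "(\<Sum>k\<in>K. \<bar>x k * y k\<bar>) \<le> sqrt (\<Sum>k\<in>K. (x k)\<^sup>2) * sqrt (\<Sum>k\<in>K. (y k)\<^sup>2)"
proof -
  have "(\<Sum>k\<in>K. \<bar>x k\<bar> * \<bar>y k\<bar>)\<^sup>2 \<le> (\<Sum>k\<in>K. \<bar>x k\<bar>\<^sup>2) * (\<Sum>k\<in>K. \<bar>y k\<bar>\<^sup>2)"
    by (rule Cauchy_Schwarz_ineq_sum)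
  then have "(\<Sum>k\<in>K. \<bar>x k * y k\<bar>)\<^sup>2 \<le> (\<Sum>k\<in>K. (x k)\<^sup>2) * (\<Sum>k\<in>K. (y k)\<^sup>2)"
    by (simp add: abs_mult)
  then have "sqrt ((\<Sum>k\<in>K. \<bar>x k * y k\<bar>)\<^sup>2) \<le> sqrt ((\<Sum>k\<in>K. (x k)\<^sup>2) * (\<Sum>k\<in>K. (y k)\<^sup>2))"
    using real_sqrt_le_mono by blast
  then show ?thesis by (simp add: real_sqrt_mult sum_nonneg)
qed

lemma amgm:
  fixes x :: "nat \<Rightarrow> real"
  assumes "finite F" "\<And>i. i \<in> F \<Longrightarrow> x i \<ge> 0" "(\<Sum>i\<in>F. x i) \<le> T"
  shows "(\<Prod>i\<in>F. x i) \<le> (T / card F) ^ card F"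
proof (cases "F = {}")
  case True then show ?thesis by simp
next
  case False
  have n: "card F > 0" using False assms(1) card_gt_0_iff by blast
  have P: "(\<Prod>i\<in>F. x i) \<ge> 0" using assms(2) by (simp add: prod_nonneg)
  have "(\<Prod>i\<in>F. x i) powr (1 / card F) \<le> (\<Sum>i\<in>F. x i / card F)"
    using arith_geom_mean[OF assms(1) False] assms(2) by blast
  also have "\<dots> = (\<Sum>i\<in>F. x i) / card F" by (simp add: sum_divide_distrib)
  also have "\<dots> \<le> T / card F" using assms(3) n by (simp add: divide_right_mono)
  finally have le: "(\<Prod>i\<in>F. x i) powr (1 / card F) \<le> T / card F" .
  have "(\<Prod>i\<in>F. x i) = ((\<Prod>i\<in>F. x i) powr (1 / card F)) ^ card F"
  proof (cases "(\<Prod>i\<in>F. x i) = 0")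
    case True then show ?thesis using n by simp
  next
    case False
    then have pos: "(\<Prod>i\<in>F. x i) > 0" using P by simp
    have "((\<Prod>i\<in>F. x i) powr (1 / card F)) ^ card F = ((\<Prod>i\<in>F. x i) powr (1 / card F)) powr (card F)"
      using pos by (simp add: powr_realpow)
    also have "\<dots> = (\<Prod>i\<in>F. x i)" using n P by (simp add: powr_powr)
    finally show ?thesis by simp
  qed
  also have "\<dots> \<le> (T / card F) ^ card F"
    by (rule power_mono[OF le]) simp
  finally show ?thesis .
qed

lemma tr_mult:
  assumes "A \<in> carrier_mat n n" "B \<in> carrier_mat n n"
  shows "mtrace (A * B) = (\<Sum>a<n. \<Sum>b<n. A $$ (a, b) * B $$ (b, a))"
  using assms unfolding mtrace_def
  by (auto simp: scalar_prod_def lessThan_atLeast0 intro!: sum.cong)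

lemma herm_carrier: "herm_mat n A \<Longrightarrow> A \<in> carrier_mat n n"
  by (simp add: herm_mat_def)

lemma herm_cnj: "herm_mat n A \<Longrightarrow> i < n \<Longrightarrow> j < n \<Longrightarrow> cnj (A $$ (i, j)) = A $$ (j, i)"
  unfolding herm_mat_def by (metis complex_cnj_cnj)

lemma herm_tr_real:
  assumes "herm_mat n A" "herm_mat n B"
  shows "Im (mtrace (A * B)) = 0"
proof -
  let ?z = "mtrace (A * B)"
  have z: "?z = (\<Sum>a<n. \<Sum>b<n. A $$ (a, b) * B $$ (b, a))"
    using tr_mult assms herm_carrier by blast
  have "cnj ?z = (\<Sum>a<n. \<Sum>b<n. A $$ (b, a) * B $$ (a, b))"
    unfolding z using assms
    by (auto intro!: sum.cong simp: mult.commute herm_cnj)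
  also have "\<dots> = ?z" unfolding z
    by (subst sum.swap) (simp add: mult.commute)
  finally have "cnj ?z = ?z" .
  then have "Im (cnj ?z) = Im ?z" by simp
  then show ?thesis by simp
qed

definition fco :: "nat \<Rightarrow> complex mat \<Rightarrow> nat \<Rightarrow> real" where
  "fco n M c = (if c div n = c mod n then Re (M $$ (c div n, c mod n))
     else if c div n < c mod n then sqrt 2 * Re (M $$ (c div n, c mod n))
     else sqrt 2 * Im (M $$ (c div n, c mod n)))"

lemma sym_sum:
  fixes g :: "nat \<Rightarrow> nat \<Rightarrow> real"
  assumes "\<And>a b. a < n \<Longrightarrow> b < n \<Longrightarrow> g a b + g b a = h a b + h b a"
  shows "(\<Sum>a<n. \<Sum>b<n. g a b) = (\<Sum>a<n. \<Sum>b<n. h a b)"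
proof -
  have sg: "(\<Sum>a<n. \<Sum>b<n. g b a) = (\<Sum>a<n. \<Sum>b<n. g a b)" by (rule sum.swap)
  have sh: "(\<Sum>a<n. \<Sum>b<n. h b a) = (\<Sum>a<n. \<Sum>b<n. h a b)" by (rule sum.swap)
  have "(\<Sum>a<n. \<Sum>b<n. g a b + g b a) = (\<Sum>a<n. \<Sum>b<n. h a b + h b a)"
    using assms by (intro sum.cong refl) auto
  then have "(\<Sum>a<n. \<Sum>b<n. g a b) + (\<Sum>a<n. \<Sum>b<n. g b a) = (\<Sum>a<n. \<Sum>b<n. h a b) + (\<Sum>a<n. \<Sum>b<n. h b a)"
    by (simp add: sum.distrib)
  then show ?thesis using sg sh by simp
qed

lemma fco_iso:
  assumes "herm_mat n M" "herm_mat n N" "n > 0"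
  shows "(\<Sum>c<n^2. fco n M c * fco n N c) = Re (mtrace (M * N))"
proof -
  define g where "g a b = (if a = b then Re (M $$ (a, b)) * Re (N $$ (a, b))
     else if a < b then 2 * (Re (M $$ (a, b)) * Re (N $$ (a, b)))
     else 2 * (Im (M $$ (a, b)) * Im (N $$ (a, b))))" for a b
  have pw: "fco n M c * fco n N c = g (c div n) (c mod n)" for c
  proof -
    have s2: "sqrt 2 * x * (sqrt 2 * y) = 2 * (x * y)" for x y :: real
      by (simp add: algebra_simps)
    show ?thesis unfolding fco_def g_def by (simp only: s2 split: if_split) simp
  qed
  have "(\<Sum>c<n^2. fco n M c * fco n N c) = (\<Sum>c<n*n. g (c div n) (c mod n))"
    by (simp only: pw power2_eq_square)
  also have "\<dots> = (\<Sum>a<n. \<Sum>b<n. g a b)" using sum_divmod[OF assms(3)] by blast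
  also have "\<dots> = (\<Sum>a<n. \<Sum>b<n. Re (M $$ (a, b) * N $$ (b, a)))"
  proof (rule sym_sum)
    fix a b assume ab: "a < n" "b < n"
    have M: "M $$ (b, a) = cnj (M $$ (a, b))" "M $$ (a, a) = cnj (M $$ (a, a))"
      using herm_cnj[OF assms(1)] ab by metis+
    have N: "N $$ (b, a) = cnj (N $$ (a, b))"
      using herm_cnj[OF assms(2)] ab by metis
    have ima: "Im (M $$ (a, a)) = 0" using M(2) by (metis cnj.simps(2) neg_equal_zero)
    have N': "N $$ (a, b) = cnj (N $$ (b, a))" "M $$ (a, b) = cnj (M $$ (b, a))"
      using herm_cnj[OF assms(2)] herm_cnj[OF assms(1)] ab by metis+
    have imn: "Im (N $$ (a, a)) = 0" using herm_cnj[OF assms(2), of a a] ab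
      by (metis cnj.simps(2) neg_equal_zero)
    show "g a b + g b a = Re (M $$ (a, b) * N $$ (b, a)) + Re (M $$ (b, a) * N $$ (a, b))"
    proof (cases "a = b")
      case True then show ?thesis using ima imn by (simp add: g_def)
    next
      case False
      then consider "a < b" | "b < a" by linarith
      then show ?thesis
      proof cases
        case 1 then show ?thesis unfolding g_def by (simp add: M(1) N)
      next
        case 2 then show ?thesis unfolding g_def by (simp add: N' algebra_simps)
      qed
    qed
  qed
  also have "\<dots> = Re (mtrace (M * N))"
    using tr_mult[OF herm_carrier[OF assms(1)] herm_carrier[OF assms(2)]] by simp
  finally show ?thesis .
qed

lemma parseval_onb:
  assumes "herm_onb n E" "n > 0" "herm_mat n M" "herm_mat n N"
  shows "(\<Sum>i<n^2. Re (mtrace (M * E i)) * Re (mtrace (N * E i))) = Re (mtrace (M * N))"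
proof -
  define Q where "Q c i = fco n (E i) c" for c i
  have EH: "\<And>i. i < n^2 \<Longrightarrow> herm_mat n (E i)" using assms(1) unfolding herm_onb_def by auto
  have "\<And>i j. i < n^2 \<Longrightarrow> j < n^2 \<Longrightarrow> (\<Sum>c<n^2. Q c i * Q c j) = (if i = j then 1 else 0)"
    unfolding Q_def using fco_iso[OF EH EH assms(2)] assms(1) unfolding herm_onb_def by auto
  note fl = ortho_flip[OF this]
  have t: "\<And>A i. herm_mat n A \<Longrightarrow> i < n^2 \<Longrightarrow> Re (mtrace (A * E i)) = (\<Sum>c<n^2. fco n A c * Q c i)"
    unfolding Q_def using fco_iso EH assms(2) by metis
  have "(\<Sum>i<n^2. Re (mtrace (M * E i)) * Re (mtrace (N * E i)))
     = (\<Sum>i<n^2. (\<Sum>c<n^2. fco n M c * Q c i) * (\<Sum>c<n^2. fco n N c * Q c i))"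
    using t assms(3,4) by simp
  also have "\<dots> = (\<Sum>c<n^2. fco n M c * fco n N c)" by (rule parseval_gen[OF fl])
  also have "\<dots> = Re (mtrace (M * N))" by (rule fco_iso[OF assms(3,4,2)])
  finally show ?thesis .
qed

lemma state_herm: "state n A \<Longrightarrow> herm_mat n A"
  by (simp add: state_def)

lemma sum_two:
  fixes f :: "nat \<Rightarrow> 'a::comm_monoid_add"
  assumes "a < n" "b < n" "a \<noteq> b" "\<And>j. j < n \<Longrightarrow> j \<noteq> a \<Longrightarrow> j \<noteq> b \<Longrightarrow> f j = 0"
  shows "(\<Sum>j<n. f j) = f a + f b"
proof -
  have "(\<Sum>j<n. f j) = (\<Sum>j<n. (if j = a then f a else 0) + (if j = b then f b else 0))"
    using assms by (intro sum.cong) auto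
  also have "\<dots> = f a + f b" using assms by (simp add: sum.distrib)
  finally show ?thesis .
qed

lemma quad2:
  fixes A :: "complex mat" and v :: "nat \<Rightarrow> complex"
  assumes "a < n" "b < n" "a \<noteq> b" "\<And>j. j \<noteq> a \<Longrightarrow> j \<noteq> b \<Longrightarrow> v j = 0"
  shows "(\<Sum>i<n. \<Sum>j<n. cnj (v i) * A $$ (i, j) * v j) =
     cnj (v a) * A $$ (a, a) * v a + cnj (v a) * A $$ (a, b) * v b + cnj (v b) * A $$ (b, a) * v a + cnj (v b) * A $$ (b, b) * v b"
proof -
  have inner: "(\<Sum>j<n. cnj (v i) * A $$ (i, j) * v j) = cnj (v i) * A $$ (i, a) * v a + cnj (v i) * A $$ (i, b) * v b" for i
    by (rule sum_two[OF assms(1-3)]) (simp add: assms(4))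
  show ?thesis unfolding inner
    by (subst sum_two[OF assms(1-3)]) (simp_all add: assms(4) algebra_simps)
qed

lemma quad_nonneg:
  assumes "state n A"
  shows "0 \<le> Re (\<Sum>i<n. \<Sum>j<n. cnj (v i) * A $$ (i, j) * v j)"
  using assms unfolding state_def by blast

lemma psd_diag:
  assumes "state n A" "a < n"
  shows "0 \<le> Re (A $$ (a, a))"
proof -
  define v where "v = (\<lambda>i. if i = a then (1::complex) else 0)"
  have "(\<Sum>i<n. \<Sum>j<n. cnj (v i) * A $$ (i, j) * v j) = A $$ (a, a)"
  proof -
    have "(\<Sum>j<n. cnj (v i) * A $$ (i, j) * v j) = (\<Sum>j<n. if j = a then cnj (v i) * A $$ (i, a) else 0)" for i
      by (rule sum.cong) (auto simp: v_def)
    then have "(\<Sum>i<n. \<Sum>j<n. cnj (v i) * A $$ (i, j) * v j) = (\<Sum>i<n. cnj (v i) * A $$ (i, a))"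
      using assms(2) by simp
    also have "\<dots> = (\<Sum>i<n. if i = a then A $$ (a, a) else 0)"
      by (rule sum.cong) (auto simp: v_def)
    finally show ?thesis using assms(2) by simp
  qed
  then show ?thesis using quad_nonneg[OF assms(1), of v] by simp
qed

lemma real_quad_lemma:
  fixes A B K :: real
  assumes "B \<ge> 0" "K \<ge> 0" "\<And>t. 0 \<le> A - 2 * t * K + t\<^sup>2 * K * B"
  shows "K \<le> A * B"
proof (cases "B > 0")
  case True
  have "0 \<le> A - 2 * (1/B) * K + (1/B)\<^sup>2 * K * B" by (rule assms(3))
  also have "\<dots> = A - K / B" using True by (simp add: power2_eq_square field_simps)
  finally have "K / B \<le> A" by simp
  then show ?thesis using True by (simp add: field_simps)
next
  case False
  then have B: "B = 0" using assms(1) by simp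
  show ?thesis
  proof (rule ccontr)
    assume "\<not> K \<le> A * B"
    then have K: "K > 0" using B by simp
    have "0 \<le> A - 2 * ((A + 1) / (2 * K)) * K + ((A + 1) / (2 * K))\<^sup>2 * K * B" by (rule assms(3))
    also have "\<dots> = -1" using K B by (simp add: field_simps)
    finally show False by simp
  qed
qed

lemma psd_minor:
  assumes "state n A" "a < n" "b < n"
  shows "(cmod (A $$ (a, b)))\<^sup>2 \<le> Re (A $$ (a, a)) * Re (A $$ (b, b))"
proof (cases "a = b")
  case True
  have "Im (A $$ (a, a)) = 0" using herm_cnj[OF state_herm[OF assms(1)], of a a] assms(2)
    by (metis cnj.simps(2) neg_equal_zero)
  then show ?thesis using True by (simp add: cmod_def power2_eq_square)
next
  case False
  let ?w = "A $$ (a, b)"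
  have ba: "A $$ (b, a) = cnj ?w" using herm_cnj[OF state_herm[OF assms(1)], of a b] assms by simp
  have wc: "?w * cnj ?w = complex_of_real ((cmod ?w)\<^sup>2)" by (rule complex_norm_square[symmetric])
  have ima: "Im (A $$ (a, a)) = 0" "Im (A $$ (b, b)) = 0"
    using herm_cnj[OF state_herm[OF assms(1)], of a a] herm_cnj[OF state_herm[OF assms(1)], of b b] assms
    by (metis cnj.simps(2) neg_equal_zero)+
  show ?thesis
  proof (rule real_quad_lemma)
    show "0 \<le> Re (A $$ (b, b))" by (rule psd_diag[OF assms(1,3)])
    show "0 \<le> (cmod ?w)\<^sup>2" by simp
    fix t :: real
    define y where "y = - complex_of_real t * cnj ?w"
    define v where "v = (\<lambda>i. if i = a then (1::complex) else if i = b then y else 0)"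
    have va: "v a = 1" "v b = y" using False by (auto simp: v_def)
    have v0: "\<And>j. j \<noteq> a \<Longrightarrow> j \<noteq> b \<Longrightarrow> v j = 0" by (simp add: v_def)
    have q0: "0 \<le> Re (\<Sum>i<n. \<Sum>j<n. cnj (v i) * A $$ (i, j) * v j)" by (rule quad_nonneg[OF assms(1)])
    have q1: "(\<Sum>i<n. \<Sum>j<n. cnj (v i) * A $$ (i, j) * v j) = cnj 1 * A $$ (a, a) * 1 + cnj 1 * A $$ (a, b) * y + cnj y * A $$ (b, a) * 1 + cnj y * A $$ (b, b) * y"
      using quad2[OF assms(2,3) False, of v A] v0 va by simp
    have e1: "?w * y = - complex_of_real t * (?w * cnj ?w)" by (simp add: y_def algebra_simps)
    have e2: "cnj y * cnj ?w = - complex_of_real t * (?w * cnj ?w)" by (simp add: y_def algebra_simps)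
    have e3: "cnj y * A $$ (b, b) * y = (complex_of_real t)\<^sup>2 * (?w * cnj ?w) * A $$ (b, b)"
      by (simp add: y_def algebra_simps power2_eq_square)
    have q2: "cnj 1 * A $$ (a, a) * 1 + cnj 1 * A $$ (a, b) * y + cnj y * A $$ (b, a) * 1 + cnj y * A $$ (b, b) * y
       = A $$ (a, a) - 2 * complex_of_real (t * (cmod ?w)\<^sup>2) + complex_of_real (t\<^sup>2 * (cmod ?w)\<^sup>2) * A $$ (b, b)"
      unfolding ba e3 by (simp add: e1 e2 wc)
    have q3: "Re (A $$ (a, a) - 2 * complex_of_real (t * (cmod ?w)\<^sup>2) + complex_of_real (t\<^sup>2 * (cmod ?w)\<^sup>2) * A $$ (b, b)) = Re (A $$ (a, a)) - 2 * t * (cmod ?w)\<^sup>2 + t\<^sup>2 * (cmod ?w)\<^sup>2 * Re (A $$ (b, b))"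
      by simp
    from q0 have "0 \<le> Re (A $$ (a, a) - 2 * complex_of_real (t * (cmod ?w)\<^sup>2) + complex_of_real (t\<^sup>2 * (cmod ?w)\<^sup>2) * A $$ (b, b))"
      by (simp only: q1 q2)
    then show "0 \<le> Re (A $$ (a, a)) - 2 * t * (cmod ?w)\<^sup>2 + t\<^sup>2 * (cmod ?w)\<^sup>2 * Re (A $$ (b, b))" using q3 by simp
  qed
qed

lemma state_tr1: "state n A \<Longrightarrow> Re (mtrace A) = 1"
  by (simp add: state_def)

lemma state_sq_le1:
  assumes "state n A"
  shows "Re (mtrace (A * A)) \<le> 1"
proof -
  have H: "herm_mat n A" using state_herm[OF assms] .
  have "Re (mtrace (A * A)) = (\<Sum>a<n. \<Sum>b<n. Re (A $$ (a, b) * A $$ (b, a)))"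
    using tr_mult[OF herm_carrier[OF H] herm_carrier[OF H]] by simp
  also have "\<dots> = (\<Sum>a<n. \<Sum>b<n. (cmod (A $$ (a, b)))\<^sup>2)"
  proof (intro sum.cong refl)
    fix a b assume "a \<in> {..<n}" "b \<in> {..<n}"
    then have "A $$ (b, a) = cnj (A $$ (a, b))" using herm_cnj[OF H, of a b] by simp
    then show "Re (A $$ (a, b) * A $$ (b, a)) = (cmod (A $$ (a, b)))\<^sup>2"
      by (simp add: complex_norm_square[symmetric] del: of_real_power)
  qed
  also have "\<dots> \<le> (\<Sum>a<n. \<Sum>b<n. Re (A $$ (a, a)) * Re (A $$ (b, b)))"
    by (intro sum_mono psd_minor[OF assms]) auto
  also have "\<dots> = (Re (mtrace A))\<^sup>2"
    unfolding mtrace_def using herm_carrier[OF H]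
    by (simp add: power2_eq_square sum_product)
  also have "\<dots> = 1" using state_tr1[OF assms] by simp
  finally show ?thesis .
qed


lemma kron_tr1:
  assumes "dB > 0" "A \<in> carrier_mat dA dA" "B \<in> carrier_mat dB dB"
    "X \<in> carrier_mat dA dA" "Y \<in> carrier_mat dB dB"
  shows "(\<Sum>i<dA*dB. \<Sum>j<dA*dB. kron dA dB A B $$ (i, j) * kron dA dB X Y $$ (j, i))
     = mtrace (A * X) * mtrace (B * Y)"
proof -
  define F where "F i1 i2 j1 j2 = A $$ (i1, j1) * B $$ (i2, j2) * (X $$ (j1, i1) * Y $$ (j2, i2))" for i1 i2 j1 j2
  have "(\<Sum>i<dA*dB. \<Sum>j<dA*dB. kron dA dB A B $$ (i, j) * kron dA dB X Y $$ (j, i))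
      = (\<Sum>i<dA*dB. \<Sum>j<dA*dB. F (i div dB) (i mod dB) (j div dB) (j mod dB))"
    by (intro sum.cong refl) (simp add: kron_def F_def)
  also have "\<dots> = (\<Sum>i<dA*dB. \<Sum>j1<dA. \<Sum>j2<dB. F (i div dB) (i mod dB) j1 j2)"
    by (rule sum.cong[OF refl], rule sum_divmod[OF assms(1)])
  also have "\<dots> = (\<Sum>i1<dA. \<Sum>i2<dB. \<Sum>j1<dA. \<Sum>j2<dB. F i1 i2 j1 j2)"
    by (rule sum_divmod[OF assms(1), where g = "\<lambda>i1 i2. \<Sum>j1<dA. \<Sum>j2<dB. F i1 i2 j1 j2"])
  also have "\<dots> = (\<Sum>i1<dA. \<Sum>j1<dA. A $$ (i1, j1) * X $$ (j1, i1)) * (\<Sum>i2<dB. \<Sum>j2<dB. B $$ (i2, j2) * Y $$ (j2, i2))"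
    by (simp add: sum_product F_def mult_ac)
  also have "\<dots> = mtrace (A * X) * mtrace (B * Y)"
    using tr_mult[OF assms(2,4)] tr_mult[OF assms(3,5)] by simp
  finally show ?thesis .
qed

lemma kron_carrier: "kron dA dB X Y \<in> carrier_mat (dA*dB) (dA*dB)"
  by (simp add: kron_def)

lemma kron_tr:
  assumes "dB > 0" "\<rho> \<in> carrier_mat (dA*dB) (dA*dB)"
    "\<And>i j. i < dA*dB \<Longrightarrow> j < dA*dB \<Longrightarrow>
       \<rho> $$ (i, j) = (\<Sum>k<m. complex_of_real (p k) * kron dA dB (SA k) (SB k) $$ (i, j))"
    "\<And>k. k < m \<Longrightarrow> SA k \<in> carrier_mat dA dA" "\<And>k. k < m \<Longrightarrow> SB k \<in> carrier_mat dB dB"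
    "X \<in> carrier_mat dA dA" "Y \<in> carrier_mat dB dB"
  shows "mtrace (\<rho> * kron dA dB X Y) =
    (\<Sum>k<m. complex_of_real (p k) * (mtrace (SA k * X) * mtrace (SB k * Y)))"
proof -
  have "mtrace (\<rho> * kron dA dB X Y) = (\<Sum>i<dA*dB. \<Sum>j<dA*dB. \<rho> $$ (i, j) * kron dA dB X Y $$ (j, i))"
    by (rule tr_mult[OF assms(2) kron_carrier])
  also have "\<dots> = (\<Sum>i<dA*dB. \<Sum>j<dA*dB. \<Sum>k<m. complex_of_real (p k) * (kron dA dB (SA k) (SB k) $$ (i, j) * kron dA dB X Y $$ (j, i)))"
    by (intro sum.cong refl) (simp add: assms(3) sum_distrib_left sum_distrib_right mult_ac)
  also have "\<dots> = (\<Sum>i<dA*dB. \<Sum>k<m. \<Sum>j<dA*dB. complex_of_real (p k) * (kron dA dB (SA k) (SB k) $$ (i, j) * kron dA dB X Y $$ (j, i)))"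
    by (rule sum.cong[OF refl], rule sum.swap)
  also have "\<dots> = (\<Sum>k<m. \<Sum>i<dA*dB. \<Sum>j<dA*dB. complex_of_real (p k) * (kron dA dB (SA k) (SB k) $$ (i, j) * kron dA dB X Y $$ (j, i)))"
    by (rule sum.swap)
  also have "\<dots> = (\<Sum>k<m. complex_of_real (p k) * (\<Sum>i<dA*dB. \<Sum>j<dA*dB. kron dA dB (SA k) (SB k) $$ (i, j) * kron dA dB X Y $$ (j, i)))"
    by (simp add: sum_distrib_left)
  also have "\<dots> = (\<Sum>k<m. complex_of_real (p k) * (mtrace (SA k * X) * mtrace (SB k * Y)))"
    by (intro sum.cong refl) (simp add: kron_tr1[OF assms(1) assms(4,5) assms(6,7)])
  finally show ?thesis .
qed

lemma herm_one: "herm_mat n (1\<^sub>m n)"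
  by (simp add: herm_mat_def)

lemma onb_herm: "herm_onb n E \<Longrightarrow> i < n^2 \<Longrightarrow> herm_mat n (E i)"
  by (simp add: herm_onb_def)

definition lcomb :: "nat \<Rightarrow> (nat \<Rightarrow> complex mat) \<Rightarrow> (nat \<Rightarrow> real) \<Rightarrow> complex mat" where
  "lcomb n E x = mat n n (\<lambda>(u, v). \<Sum>i<n^2. complex_of_real (x i) * E i $$ (u, v))"

lemma lcomb_herm:
  assumes "herm_onb n E" shows "herm_mat n (lcomb n E x)"
  unfolding herm_mat_def lcomb_def
  using herm_cnj[OF onb_herm[OF assms]] by (auto intro!: sum.cong)

lemma lcomb_tr:
  assumes "S \<in> carrier_mat n n" "herm_onb n E"
  shows "mtrace (S * lcomb n E x) = (\<Sum>i<n^2. complex_of_real (x i) * mtrace (S * E i))"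
proof -
  have "mtrace (S * lcomb n E x) = (\<Sum>u<n. \<Sum>v<n. S $$ (u, v) * lcomb n E x $$ (v, u))"
    by (rule tr_mult[OF assms(1)]) (simp add: lcomb_def)
  also have "\<dots> = (\<Sum>u<n. \<Sum>v<n. \<Sum>i<n^2. complex_of_real (x i) * (S $$ (u, v) * E i $$ (v, u)))"
    by (intro sum.cong refl) (simp add: lcomb_def sum_distrib_left mult_ac)
  also have "\<dots> = (\<Sum>u<n. \<Sum>i<n^2. \<Sum>v<n. complex_of_real (x i) * (S $$ (u, v) * E i $$ (v, u)))"
    by (rule sum.cong[OF refl], rule sum.swap)
  also have "\<dots> = (\<Sum>i<n^2. \<Sum>u<n. \<Sum>v<n. complex_of_real (x i) * (S $$ (u, v) * E i $$ (v, u)))"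
    by (rule sum.swap)
  also have "\<dots> = (\<Sum>i<n^2. complex_of_real (x i) * (\<Sum>u<n. \<Sum>v<n. S $$ (u, v) * E i $$ (v, u)))"
    by (simp add: sum_distrib_left)
  also have "\<dots> = (\<Sum>i<n^2. complex_of_real (x i) * mtrace (S * E i))"
    using tr_mult[OF assms(1) herm_carrier[OF onb_herm[OF assms(2)]]] by (intro sum.cong refl) simp
  finally show ?thesis .
qed

lemma re_mult_real: "Im z = 0 \<Longrightarrow> Im w = 0 \<Longrightarrow> Re (z * w) = Re z * Re w"
  by simp

lemma tr_one: "A \<in> carrier_mat n n \<Longrightarrow> mtrace (A * 1\<^sub>m n) = mtrace A"
  by simp

lemma tr_one_left: "A \<in> carrier_mat n n \<Longrightarrow> mtrace (1\<^sub>m n * A) = mtrace A"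
  by simp

lemma tr_one_one: "mtrace (1\<^sub>m n * 1\<^sub>m n) = of_nat n"
  by (simp add: mtrace_def)

lemma fnf_side:
  assumes onb: "herm_onb n E" and n: "n > 0"
    and st: "\<And>k. k < m \<Longrightarrow> state n (S k)" and psum: "(\<Sum>k<m. p k) = 1"
    and H: "\<And>X. herm_mat n X \<Longrightarrow> mtrace X = 0 \<Longrightarrow> (\<Sum>k<m. p k * Re (mtrace (S k * X))) = 0"
  shows "\<And>i. i < n^2 \<Longrightarrow> (\<Sum>k<m. p k * Re (mtrace (S k * E i))) = Re (mtrace (1\<^sub>m n * E i)) / n"
proof -
  define t where "t i = Re (mtrace (1\<^sub>m n * E i))" for i
  define ab where "ab i = (\<Sum>k<m. p k * Re (mtrace (S k * E i)))" for i
  define x where "x i = ab i - t i / n" for i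
  have SH: "\<And>k. k < m \<Longrightarrow> herm_mat n (S k)" using st state_herm by blast
  have P1: "(\<Sum>i<n^2. Re (mtrace (S k * E i)) * t i) = 1" if "k < m" for k
    unfolding t_def using parseval_onb[OF onb n SH[OF that] herm_one] state_tr1[OF st[OF that]]
      tr_one[OF herm_carrier[OF SH[OF that]]] by simp
  have P2: "(\<Sum>i<n^2. t i * t i) = n"
    unfolding t_def using parseval_onb[OF onb n herm_one herm_one] tr_one_one by simp
  have abt: "(\<Sum>i<n^2. ab i * t i) = 1"
  proof -
    have "(\<Sum>i<n^2. ab i * t i) = (\<Sum>k<m. p k * (\<Sum>i<n^2. Re (mtrace (S k * E i)) * t i))"
      unfolding ab_def by (simp add: sum_distrib_right sum_distrib_left mult_ac sum.swap[of _ "{..<n^2}"])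
    also have "\<dots> = (\<Sum>k<m. p k)" using P1 by simp
    finally show ?thesis using psum by simp
  qed
  have xt: "(\<Sum>i<n^2. x i * t i) = 0"
  proof -
    have "(\<Sum>i<n^2. x i * t i) = (\<Sum>i<n^2. ab i * t i) - (\<Sum>i<n^2. t i * t i) / n"
      unfolding x_def by (simp add: algebra_simps sum_subtractf sum_divide_distrib)
    then show ?thesis using abt P2 n by simp
  qed
  define X where "X = lcomb n E x"
  have XH: "herm_mat n X" unfolding X_def by (rule lcomb_herm[OF onb])
  have "mtrace X = mtrace (1\<^sub>m n * X)" using herm_carrier[OF XH] by simp
  also have "\<dots> = (\<Sum>i<n^2. complex_of_real (x i) * mtrace (1\<^sub>m n * E i))"
    unfolding X_def by (rule lcomb_tr[OF _ onb]) simp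
  also have "\<dots> = (\<Sum>i<n^2. complex_of_real (x i * t i))"
  proof (intro sum.cong refl)
    fix i assume "i \<in> {..<n^2}"
    then have "Im (mtrace (1\<^sub>m n * E i)) = 0" using herm_tr_real[OF herm_one onb_herm[OF onb]] by simp
    then have "mtrace (1\<^sub>m n * E i) = complex_of_real (t i)" unfolding t_def by (simp add: complex_eq_iff)
    then show "complex_of_real (x i) * mtrace (1\<^sub>m n * E i) = complex_of_real (x i * t i)" by simp
  qed
  also have "\<dots> = 0" by (subst of_real_sum[symmetric]) (simp add: xt)
  finally have "mtrace X = 0" .
  from H[OF XH this] have H0: "(\<Sum>k<m. p k * Re (mtrace (S k * X))) = 0" .
  have "(\<Sum>k<m. p k * Re (mtrace (S k * X))) = (\<Sum>k<m. p k * (\<Sum>i<n^2. x i * Re (mtrace (S k * E i))))"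
  proof (intro sum.cong refl)
    fix k assume "k \<in> {..<m}"
    then have "mtrace (S k * X) = (\<Sum>i<n^2. complex_of_real (x i) * mtrace (S k * E i))"
      unfolding X_def using lcomb_tr[OF herm_carrier[OF SH] onb] by simp
    then show "p k * Re (mtrace (S k * X)) = p k * (\<Sum>i<n^2. x i * Re (mtrace (S k * E i)))"
      by (simp add: Re_sum)
  qed
  also have "\<dots> = (\<Sum>i<n^2. x i * ab i)"
    unfolding ab_def by (simp add: sum_distrib_right sum_distrib_left mult_ac sum.swap[of _ "{..<n^2}"])
  finally have xab: "(\<Sum>i<n^2. x i * ab i) = 0" using H0 by simp
  have "(\<Sum>i<n^2. (x i)\<^sup>2) = (\<Sum>i<n^2. x i * ab i) - (\<Sum>i<n^2. x i * t i) / n"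
  proof -
    have "(x i)\<^sup>2 = x i * ab i - x i * t i / n" for i
    proof -
      have xe: "x i = ab i - t i / n" by (simp add: x_def)
      have "(x i)\<^sup>2 = x i * (ab i - t i / n)" using xe by (simp add: power2_eq_square)
      also have "\<dots> = x i * ab i - x i * t i / n" by (simp add: right_diff_distrib)
      finally show ?thesis .
    qed
    then show ?thesis by (simp add: sum_subtractf sum_divide_distrib)
  qed
  then have "(\<Sum>i<n^2. (x i)\<^sup>2) = 0" using xab xt by simp
  then have x0: "\<And>i. i < n^2 \<Longrightarrow> x i = 0"
    using sum_nonneg_eq_0_iff[of "{..<n^2}" "\<lambda>i. (x i)\<^sup>2"] by simp
  fix i assume "i < n^2"
  then show "(\<Sum>k<m. p k * Re (mtrace (S k * E i))) = Re (mtrace (1\<^sub>m n * E i)) / n"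
    using x0[of i] unfolding x_def ab_def t_def by simp
qed

lemma side_facts:
  assumes onb: "herm_onb n E" and n: "n > 0" and st: "state n A"
  shows "(\<Sum>i<n^2. Re (mtrace (A * E i)) * (Re (mtrace (1\<^sub>m n * E i)) / n)) = 1 / n"
    and "(\<Sum>i<n^2. (Re (mtrace (1\<^sub>m n * E i)) / n)\<^sup>2) = 1 / n"
    and "(\<Sum>i<n^2. (Re (mtrace (A * E i)) - Re (mtrace (1\<^sub>m n * E i)) / n)\<^sup>2) \<le> 1 - 1 / n"
proof -
  define t where "t i = Re (mtrace (1\<^sub>m n * E i))" for i
  define a where "a i = Re (mtrace (A * E i))" for i
  have AH: "herm_mat n A" using st state_herm by blast
  have P1: "(\<Sum>i<n^2. a i * t i) = 1"
    unfolding t_def a_def using parseval_onb[OF onb n AH herm_one] state_tr1[OF st]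
      tr_one[OF herm_carrier[OF AH]] by simp
  have P2: "(\<Sum>i<n^2. t i * t i) = n"
    unfolding t_def using parseval_onb[OF onb n herm_one herm_one] tr_one_one by simp
  have P3: "(\<Sum>i<n^2. a i * a i) \<le> 1"
    unfolding a_def using parseval_onb[OF onb n AH AH] state_sq_le1[OF st] by simp
  show F1: "(\<Sum>i<n^2. Re (mtrace (A * E i)) * (Re (mtrace (1\<^sub>m n * E i)) / n)) = 1 / n"
    using P1 unfolding a_def t_def by (simp add: sum_divide_distrib[symmetric])
  show F2: "(\<Sum>i<n^2. (Re (mtrace (1\<^sub>m n * E i)) / n)\<^sup>2) = 1 / n"
  proof -
    have "(\<Sum>i<n^2. (t i / n)\<^sup>2) = (\<Sum>i<n^2. t i * t i) / (n * n)"
      by (simp add: power2_eq_square sum_divide_distrib)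
    then show ?thesis using P2 n unfolding t_def by simp
  qed
  have "(\<Sum>i<n^2. (a i - t i / n)\<^sup>2) = (\<Sum>i<n^2. a i * a i) - 2 * (\<Sum>i<n^2. a i * (t i / n)) + (\<Sum>i<n^2. (t i / n)\<^sup>2)"
    by (simp add: power2_eq_square algebra_simps sum.distrib sum_subtractf sum_distrib_left)
  also have "\<dots> \<le> 1 - 2 * (1 / n) + 1 / n"
    using P3 F1 F2 unfolding a_def t_def by simp
  finally show "(\<Sum>i<n^2. (Re (mtrace (A * E i)) - Re (mtrace (1\<^sub>m n * E i)) / n)\<^sup>2) \<le> 1 - 1 / n"
    unfolding a_def t_def by simp
qed

lemma pair_lemma:
  fixes s x y a b :: real
  assumes "s \<ge> 0" "a > 0" "b > 0" "s * x = y / a" "s * y = x / b" "s \<noteq> 1 / sqrt (a * b)"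
  shows "x * y = 0"
proof (rule ccontr)
  assume "x * y \<noteq> 0"
  then have x: "x \<noteq> 0" by auto
  have y: "y = a * s * x" using assms(2,4) by (simp add: field_simps)
  have "s * (a * s * x) = x / b" using assms(5) y by simp
  then have "x * (a * b * s\<^sup>2) = x" using assms(3) by (simp add: field_simps power2_eq_square)
  then have "a * b * s\<^sup>2 = 1" using x by simp
  then have "s\<^sup>2 = 1 / (a * b)" using assms(2,3) by (simp add: field_simps)
  then have "s = sqrt (1 / (a * b))" using assms(1) by (simp add: real_sqrt_unique)
  then show False using assms(6) by (simp add: real_sqrt_divide)
qed

lemma final_comb:
  fixes \<sigma> xy \<tau> :: "nat \<Rightarrow> real" and r S :: real and h :: nat
  assumes r: "r > 0" and S: "S \<ge> 0" and h: "h \<ge> 1"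
    and nonneg: "\<And>k. k < h \<Longrightarrow> \<sigma> k \<ge> 0"
    and dec: "\<And>k. k < h \<Longrightarrow> \<sigma> k = xy k + \<tau> k"
    and sxy: "(\<Sum>k<h. \<bar>xy k\<bar>) \<le> r" and st: "(\<Sum>k<h. \<bar>\<tau> k\<bar>) \<le> S"
    and z: "\<And>k. k < h \<Longrightarrow> \<sigma> k \<noteq> r \<Longrightarrow> xy k = 0"
    and Shr: "S \<le> h * r"
  shows "(\<Prod>k<h. \<sigma> k) \<le> r * (S / (real h - 1)) ^ (h - 1)"
proof (cases "\<exists>k0<h. \<sigma> k0 = r")
  case True
  then obtain k0 where k0: "k0 < h" "\<sigma> k0 = r" by blast
  have "(\<Sum>k<h. \<sigma> k) = (\<Sum>k<h. xy k + \<tau> k)" using dec by simp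
  also have "\<dots> \<le> (\<Sum>k<h. \<bar>xy k\<bar>) + (\<Sum>k<h. \<bar>\<tau> k\<bar>)"
    by (simp add: sum.distrib[symmetric] sum_mono)
  finally have tot: "(\<Sum>k<h. \<sigma> k) \<le> r + S" using sxy st by simp
  define F where "F = {..<h} - {k0}"
  have cF: "card F = h - 1" unfolding F_def using k0 by simp
  have sF: "(\<Sum>k\<in>F. \<sigma> k) \<le> S"
    using tot sum.remove[of "{..<h}" k0 \<sigma>] k0 unfolding F_def by simp
  have pF: "(\<Prod>k\<in>F. \<sigma> k) \<le> (S / card F) ^ card F"
    by (rule amgm) (use sF nonneg in \<open>auto simp: F_def\<close>)
  have hh: "real (h - 1) = real h - 1" using h by simp
  have "(\<Prod>k<h. \<sigma> k) = \<sigma> k0 * (\<Prod>k\<in>F. \<sigma> k)"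
    using prod.remove[of "{..<h}" k0 \<sigma>] k0 unfolding F_def by simp
  also have "\<dots> \<le> r * (S / (real h - 1)) ^ (h - 1)"
    using pF cF hh k0 r by (simp add: mult_left_mono)
  finally show ?thesis .
next
  case False
  then have xy0: "\<And>k. k < h \<Longrightarrow> xy k = 0" using z by blast
  have "(\<Sum>k<h. \<sigma> k) = (\<Sum>k<h. \<tau> k)" using dec xy0 by simp
  also have "\<dots> \<le> (\<Sum>k<h. \<bar>\<tau> k\<bar>)" by (simp add: sum_mono)
  finally have tot: "(\<Sum>k<h. \<sigma> k) \<le> S" using st by simp
  have p: "(\<Prod>k<h. \<sigma> k) \<le> (S / h) ^ h"
    using amgm[of "{..<h}" \<sigma> S] tot nonneg by simp
  have h0: "real h > 0" using h by simp
  have Sh: "S / h \<le> r" using Shr h0 by (simp add: divide_le_eq mult.commute)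
  have Sh0: "S / h \<ge> 0" using S by simp
  have pw: "(S / h) ^ (h - 1) \<le> (S / (real h - 1)) ^ (h - 1)"
  proof (cases "h = 1")
    case True then show ?thesis by simp
  next
    case False
    then have "real h - 1 > 0" using h by simp
    then have "S / h \<le> S / (real h - 1)" using S by (intro divide_left_mono) auto
    then show ?thesis using Sh0 by (simp add: power_mono)
  qed
  have "(S / h) ^ h = (S / h) * (S / h) ^ (h - 1)"
    using h by (metis Suc_diff_le diff_Suc_1 power_Suc)
  also have "\<dots> \<le> r * (S / (real h - 1)) ^ (h - 1)"
    by (rule mult_mono[OF Sh pw]) (use r Sh0 in auto)
  finally show ?thesis using p by simp
qed

lemma orth_cols:
  assumes "orthogonal_mat n W"
  shows "\<And>k l. k < n \<Longrightarrow> l < n \<Longrightarrow> (\<Sum>i<n. W $$ (i, k) * W $$ (i, l)) = (if k = l then 1 else 0)"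
proof -
  fix k l assume kl: "k < n" "l < n"
  have W: "W \<in> carrier_mat n n" "transpose_mat W * W = 1\<^sub>m n" using assms by (auto simp: orthogonal_mat_def)
  have "(transpose_mat W * W) $$ (k, l) = (\<Sum>i<n. W $$ (i, k) * W $$ (i, l))"
    using W(1) kl by (simp add: scalar_prod_def lessThan_atLeast0)
  then show "(\<Sum>i<n. W $$ (i, k) * W $$ (i, l)) = (if k = l then 1 else 0)" using W(2) kl by simp
qed

lemma orth_rows:
  assumes "orthogonal_mat n W"
  shows "\<And>i j. i < n \<Longrightarrow> j < n \<Longrightarrow> (\<Sum>k<n. W $$ (i, k) * W $$ (j, k)) = (if i = j then 1 else 0)"
  using ortho_flip[of n "\<lambda>c i. W $$ (c, i)"] orth_cols[OF assms] by blast

lemma svd_entry: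
  assumes "singular_values C s" "C \<in> carrier_mat R Q"
  obtains U V where "orthogonal_mat R U" "orthogonal_mat Q V" "length s = min R Q"
    "\<And>i j. i < R \<Longrightarrow> j < Q \<Longrightarrow> C $$ (i, j) = (\<Sum>l<min R Q. s ! l * U $$ (i, l) * V $$ (j, l))"
proof -
  have dr: "dim_row C = R" "dim_col C = Q" using assms(2) by auto
  have len: "length s = min R Q" using assms(1) unfolding singular_values_def dr by blast
  have "\<exists>U V. orthogonal_mat R U \<and> orthogonal_mat Q V \<and> C = U * mat R Q (\<lambda>(i, j). if i = j then s ! i else 0) * transpose_mat V"
    using assms(1) unfolding singular_values_def dr by blast
  then obtain U V where U: "orthogonal_mat R U" and V: "orthogonal_mat Q V"
    and Ceq: "C = U * mat R Q (\<lambda>(i, j). if i = j then s ! i else 0) * transpose_mat V"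
    by blast
  have Uc: "U \<in> carrier_mat R R" and Vc: "V \<in> carrier_mat Q Q"
    using U V by (auto simp: orthogonal_mat_def)
  define D where "D = mat R Q (\<lambda>(i, j). if i = j then s ! i else 0)"
  have UD: "(U * D) $$ (i, l) = (if l < R then U $$ (i, l) * s ! l else 0)" if "i < R" "l < Q" for i l
  proof -
    have "(U * D) $$ (i, l) = (\<Sum>q<R. U $$ (i, q) * (if q = l then s ! q else 0))"
      using that Uc by (simp add: D_def scalar_prod_def lessThan_atLeast0)
    also have "\<dots> = (\<Sum>q<R. if q = l then U $$ (i, l) * s ! l else 0)"
      by (intro sum.cong refl) auto
    also have "\<dots> = (if l < R then U $$ (i, l) * s ! l else 0)" by simp
    finally show ?thesis .
  qed
  have "\<And>i j. i < R \<Longrightarrow> j < Q \<Longrightarrow> C $$ (i, j) = (\<Sum>l<min R Q. s ! l * U $$ (i, l) * V $$ (j, l))"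
  proof -
    fix i j assume ij: "i < R" "j < Q"
    have "C $$ (i, j) = (\<Sum>l<Q. (U * D) $$ (i, l) * V $$ (j, l))"
      unfolding Ceq D_def[symmetric] using ij Uc Vc by (simp add: D_def scalar_prod_def lessThan_atLeast0)
    also have "\<dots> = (\<Sum>l<Q. if l < R then s ! l * U $$ (i, l) * V $$ (j, l) else 0)"
      by (intro sum.cong refl) (auto simp: UD ij)
    also have "\<dots> = (\<Sum>l\<in>{l\<in>{..<Q}. l < R}. s ! l * U $$ (i, l) * V $$ (j, l))"
      by (rule sum.inter_filter[symmetric]) simp
    also have "{l\<in>{..<Q}. l < R} = {..<min R Q}" by auto
    finally show "C $$ (i, j) = (\<Sum>l<min R Q. s ! l * U $$ (i, l) * V $$ (j, l))" .
  qed
  then show ?thesis using that U V len by blast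
qed

lemma svd_eqs:
  assumes "orthogonal_mat R U" "orthogonal_mat Q V"
    "\<And>i j. i < R \<Longrightarrow> j < Q \<Longrightarrow> C $$ (i, j) = (\<Sum>l<min R Q. s ! l * U $$ (i, l) * V $$ (j, l))"
    "k < min R Q"
  shows "\<And>i. i < R \<Longrightarrow> (\<Sum>j<Q. C $$ (i, j) * V $$ (j, k)) = s ! k * U $$ (i, k)"
    and "\<And>j. j < Q \<Longrightarrow> (\<Sum>i<R. C $$ (i, j) * U $$ (i, k)) = s ! k * V $$ (j, k)"
proof -
  fix i assume i: "i < R"
  have "(\<Sum>j<Q. C $$ (i, j) * V $$ (j, k)) = (\<Sum>j<Q. \<Sum>l<min R Q. s ! l * U $$ (i, l) * (V $$ (j, l) * V $$ (j, k)))"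
    using i assms(3) by (simp add: sum_distrib_right sum_distrib_left mult_ac)
  also have "\<dots> = (\<Sum>l<min R Q. \<Sum>j<Q. s ! l * U $$ (i, l) * (V $$ (j, l) * V $$ (j, k)))"
    by (rule sum.swap)
  also have "\<dots> = (\<Sum>l<min R Q. s ! l * U $$ (i, l) * (if l = k then 1 else 0))"
    using orth_cols[OF assms(2)] assms(4) by (simp add: sum_distrib_left[symmetric])
  also have "\<dots> = s ! k * U $$ (i, k)" using assms(4) by (simp add: if_distrib cong: if_cong)
  finally show "(\<Sum>j<Q. C $$ (i, j) * V $$ (j, k)) = s ! k * U $$ (i, k)" .
next
  fix j assume j: "j < Q"
  have "(\<Sum>i<R. C $$ (i, j) * U $$ (i, k)) = (\<Sum>i<R. \<Sum>l<min R Q. s ! l * V $$ (j, l) * (U $$ (i, l) * U $$ (i, k)))"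
    using j assms(3) by (simp add: sum_distrib_right sum_distrib_left mult_ac)
  also have "\<dots> = (\<Sum>l<min R Q. \<Sum>i<R. s ! l * V $$ (j, l) * (U $$ (i, l) * U $$ (i, k)))"
    by (rule sum.swap)
  also have "\<dots> = (\<Sum>l<min R Q. s ! l * V $$ (j, l) * (if l = k then 1 else 0))"
    using orth_cols[OF assms(1)] assms(4) by (simp add: sum_distrib_left[symmetric])
  also have "\<dots> = s ! k * V $$ (j, k)" using assms(4) by (simp add: if_distrib cong: if_cong)
  finally show "(\<Sum>i<R. C $$ (i, j) * U $$ (i, k)) = s ! k * V $$ (j, k)" .
qed

lemma bessel_part:
  assumes "orthogonal_mat N U" "h \<le> N"
  shows "(\<Sum>k<h. (\<Sum>i<N. U $$ (i, k) * z i)\<^sup>2) \<le> (\<Sum>i<N. (z i)\<^sup>2)"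
proof -
  have "(\<Sum>k<h. (\<Sum>i<N. U $$ (i, k) * z i)\<^sup>2) \<le> (\<Sum>k<N. (\<Sum>i<N. U $$ (i, k) * z i)\<^sup>2)"
    by (rule sum_mono2) (use assms(2) in auto)
  also have "\<dots> = (\<Sum>k<N. (\<Sum>c<N. z c * U $$ (c, k)) * (\<Sum>c<N. z c * U $$ (c, k)))"
    by (simp add: power2_eq_square mult.commute)
  also have "\<dots> = (\<Sum>c<N. z c * z c)"
    by (rule parseval_gen[where Q = "\<lambda>c k. U $$ (c, k)"]) (rule orth_rows[OF assms(1)])
  finally show ?thesis by (simp add: power2_eq_square)
qed

lemma min_sq: "min (a^2) (b^2) = (min a b :: nat)^2"
  by (simp add: min_def power2_nat_le_eq_le)

lemma sqrt_1m_le1: "n > 0 \<Longrightarrow> sqrt (1 - 1 / real n) \<le> 1"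
  by simp


lemma triple:
  fixes u v :: "nat \<Rightarrow> real" and p :: "nat \<Rightarrow> real" and a b :: "nat \<Rightarrow> nat \<Rightarrow> real"
  shows "(\<Sum>i\<in>I. u i * (\<Sum>j\<in>J. (\<Sum>q\<in>Q. p q * a q i * b q j) * v j)) =
    (\<Sum>q\<in>Q. p q * (\<Sum>i\<in>I. u i * a q i) * (\<Sum>j\<in>J. v j * b q j))"
proof -
  have "(\<Sum>i\<in>I. u i * (\<Sum>j\<in>J. (\<Sum>q\<in>Q. p q * a q i * b q j) * v j)) =
        (\<Sum>i\<in>I. \<Sum>j\<in>J. \<Sum>q\<in>Q. p q * (u i * a q i) * (v j * b q j))"
    by (simp add: sum_distrib_left sum_distrib_right mult_ac)
  also have "\<dots> = (\<Sum>i\<in>I. \<Sum>q\<in>Q. \<Sum>j\<in>J. p q * (u i * a q i) * (v j * b q j))"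
    by (rule sum.cong[OF refl], rule sum.swap)
  also have "\<dots> = (\<Sum>q\<in>Q. \<Sum>i\<in>I. \<Sum>j\<in>J. p q * (u i * a q i) * (v j * b q j))"
    by (rule sum.swap)
  also have "\<dots> = (\<Sum>q\<in>Q. p q * (\<Sum>i\<in>I. u i * a q i) * (\<Sum>j\<in>J. v j * b q j))"
    by (simp add: sum_distrib_left sum_distrib_right mult_ac)
  finally show ?thesis .
qed

lemma wavg:
  fixes u :: "nat \<Rightarrow> real" and p :: "nat \<Rightarrow> real" and a :: "nat \<Rightarrow> nat \<Rightarrow> real"
  shows "(\<Sum>q\<in>Q. p q * (\<Sum>i\<in>I. u i * a q i)) = (\<Sum>i\<in>I. u i * (\<Sum>q\<in>Q. p q * a q i))"
proof -
  have "(\<Sum>q\<in>Q. p q * (\<Sum>i\<in>I. u i * a q i)) = (\<Sum>q\<in>Q. \<Sum>i\<in>I. u i * (p q * a q i))"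
    by (simp add: sum_distrib_left mult_ac)
  also have "\<dots> = (\<Sum>i\<in>I. \<Sum>q\<in>Q. u i * (p q * a q i))" by (rule sum.swap)
  also have "\<dots> = (\<Sum>i\<in>I. u i * (\<Sum>q\<in>Q. p q * a q i))" by (simp add: sum_distrib_left)
  finally show ?thesis .
qed

lemma maxmin_prod: "real (max x y) * real (min x y) = real x * real y"
  by (cases "x \<le> y") (auto simp: max_def min_def mult.commute)

lemma rhs_eq:
  assumes "dA \<ge> 1" "dB \<ge> 1" "h \<ge> 1"
  shows "1 / sqrt (real (max dA dB) * real (min dA dB)) *
    sqrt ((real (max dA dB) - 1) / (real (max dA dB) * (real h - 1)) *
          ((real (min dA dB) - 1) / (real (min dA dB) * (real h - 1)))) ^ (h - 1)
   = 1 / sqrt (real dA * real dB) * ((sqrt (1 - 1 / real dA) * sqrt (1 - 1 / real dB)) / (real h - 1)) ^ (h - 1)"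
proof (cases "h = 1")
  case True then show ?thesis by (simp add: maxmin_prod)
next
  case False
  define c where "c = real h - 1"
  have c: "c > 0" using False assms(3) unfolding c_def by simp
  have base: "(real D - 1) / (real D * c) * ((real d - 1) / (real d * c)) = ((1 - 1 / real D) * (1 - 1 / real d)) / c\<^sup>2"
    if "D \<ge> 1" "d \<ge> 1" for D d :: nat
    using that c by (simp add: field_simps power2_eq_square)
  have sq: "sqrt (((1 - 1 / real D) * (1 - 1 / real d)) / c\<^sup>2) = sqrt (1 - 1 / real D) * sqrt (1 - 1 / real d) / c"
    for D d :: nat
    using c by (simp add: real_sqrt_divide real_sqrt_mult)
  have mm: "max dA dB \<ge> 1" "min dA dB \<ge> 1" using assms by auto
  have sw: "sqrt (1 - 1 / real (max dA dB)) * sqrt (1 - 1 / real (min dA dB)) = sqrt (1 - 1 / real dA) * sqrt (1 - 1 / real dB)"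
    by (cases "dA \<le> dB") (auto simp: max_def min_def mult.commute)
  show ?thesis
    unfolding c_def[symmetric] base[OF mm] sq sw maxmin_prod by simp
qed

theorem theorem3:
  fixes dA dB h :: nat and \<rho> :: "complex mat"
    and EA EB :: "nat \<Rightarrow> complex mat" and s :: "real list"
  assumes "dA \<ge> 1" and "dB \<ge> 1"
    and "separable dA dB \<rho>"
    and "filter_normal_form dA dB \<rho>"
    and "herm_onb dA EA" and "herm_onb dB EB"
    and "singular_values (corr_mat dA dB EA EB \<rho>) s"
    and "sqrt (real (max dA dB) * real (min dA dB)) \<le> real h"
    and "h \<le> (min dA dB)^2"
  shows "M_h_inf h s \<le>
    1 / sqrt (real (max dA dB) * real (min dA dB)) *
    sqrt ((real (max dA dB) - 1) / (real (max dA dB) * (real h - 1)) *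
          ((real (min dA dB) - 1) / (real (min dA dB) * (real h - 1)))) ^ (h - 1)"
proof -
  note dA = assms(1) and dB = assms(2) and sep = assms(3) and fnf = assms(4)
    and onbA = assms(5) and onbB = assms(6) and svd = assms(7) and hge = assms(8) and hle = assms(9)
  have dA0: "dA > 0" and dB0: "dB > 0" using dA dB by auto
  have sep2: "\<exists>(m::nat) (p::nat \<Rightarrow> real) \<sigma>A \<sigma>B.
        (\<forall>k<m. 0 \<le> p k \<and> state dA (\<sigma>A k) \<and> state dB (\<sigma>B k)) \<and>
        (\<Sum>k<m. p k) = 1 \<and>
        (\<forall>i<dA * dB. \<forall>j<dA * dB.
           \<rho> $$ (i, j) = (\<Sum>k<m. complex_of_real (p k) * kron dA dB (\<sigma>A k) (\<sigma>B k) $$ (i, j)))"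
    using sep unfolding separable_def by (rule conjunct2)
  from sep2 obtain m p SA SB where
    stp: "\<forall>k<(m::nat). 0 \<le> p k \<and> state dA (SA k) \<and> state dB (SB k)" and
    psum: "(\<Sum>k<m. p k) = 1" and
    rhoeq: "\<forall>i<dA * dB. \<forall>j<dA * dB.
           \<rho> $$ (i, j) = (\<Sum>k<m. complex_of_real (p k) * kron dA dB (SA k) (SB k) $$ (i, j))"
    by blast
  have rhoc: "\<rho> \<in> carrier_mat (dA*dB) (dA*dB)"
    using sep unfolding separable_def state_def herm_mat_def by blast
  have m0: "0 < m" using psum by (cases m) auto
  have p0: "\<And>q. q < m \<Longrightarrow> p q \<ge> 0" using stp by blast
  have stA: "\<And>q. q < m \<Longrightarrow> state dA (SA q)" using stp by blast
  have stB: "\<And>q. q < m \<Longrightarrow> state dB (SB q)" using stp by blast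
  have HA: "\<And>q. q < m \<Longrightarrow> herm_mat dA (SA q)" using stA state_herm by blast
  have HB: "\<And>q. q < m \<Longrightarrow> herm_mat dB (SB q)" using stB state_herm by blast
  have RT: "Re (mtrace (\<rho> * kron dA dB X Y)) = (\<Sum>q<m. p q * (Re (mtrace (SA q * X)) * Re (mtrace (SB q * Y))))"
    if X: "herm_mat dA X" and Y: "herm_mat dB Y" for X Y
  proof -
    have "mtrace (\<rho> * kron dA dB X Y) =
      (\<Sum>q<m. complex_of_real (p q) * (mtrace (SA q * X) * mtrace (SB q * Y)))"
      by (rule kron_tr[OF dB0 rhoc _ _ _ herm_carrier[OF X] herm_carrier[OF Y]])
        (use rhoeq herm_carrier[OF HA] herm_carrier[OF HB] in auto)
    then show ?thesis
      using herm_tr_real[OF HA X] herm_tr_real[OF HB Y] by (simp add: re_mult_real)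
  qed
  define NA where "NA = dA^2"
  define NB where "NB = dB^2"
  define a where "a q i = Re (mtrace (SA q * EA i))" for q i
  define b where "b q j = Re (mtrace (SB q * EB j))" for q j
  define eA where "eA i = Re (mtrace (1\<^sub>m dA * EA i)) / dA" for i
  define eB where "eB j = Re (mtrace (1\<^sub>m dB * EB j)) / dB" for j
  define C where "C = corr_mat dA dB EA EB \<rho>"
  have Cc: "C \<in> carrier_mat NA NB" unfolding C_def corr_mat_def NA_def NB_def by simp
  have Cij: "C $$ (i, j) = (\<Sum>q<m. p q * a q i * b q j)" if "i < NA" "j < NB" for i j
    using that RT[OF onb_herm[OF onbA] onb_herm[OF onbB]]
    unfolding C_def corr_mat_def NA_def NB_def a_def b_def by (simp add: mult.assoc)
  have abar: "(\<Sum>q<m. p q * a q i) = eA i" if "i < NA" for i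
  proof -
    have "(\<Sum>q<m. p q * Re (mtrace (SA q * EA i))) = Re (mtrace (1\<^sub>m dA * EA i)) / dA"
    proof (rule fnf_side[OF onbA dA0 stA psum _ that[unfolded NA_def]])
      fix X assume X: "herm_mat dA X" "mtrace X = 0"
      have "mtrace (\<rho> * kron dA dB X (1\<^sub>m dB)) = 0" using fnf X unfolding filter_normal_form_def by blast
      then have "0 = (\<Sum>q<m. p q * (Re (mtrace (SA q * X)) * Re (mtrace (SB q * 1\<^sub>m dB))))"
        using RT[OF X(1) herm_one] by simp
      also have "\<dots> = (\<Sum>q<m. p q * Re (mtrace (SA q * X)))"
        using state_tr1[OF stB] tr_one[OF herm_carrier[OF HB]] by simp
      finally show "(\<Sum>q<m. p q * Re (mtrace (SA q * X))) = 0" by simp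
    qed
    then show ?thesis unfolding a_def eA_def .
  qed
  have bbar: "(\<Sum>q<m. p q * b q j) = eB j" if "j < NB" for j
  proof -
    have "(\<Sum>q<m. p q * Re (mtrace (SB q * EB j))) = Re (mtrace (1\<^sub>m dB * EB j)) / dB"
    proof (rule fnf_side[OF onbB dB0 stB psum _ that[unfolded NB_def]])
      fix Y assume Y: "herm_mat dB Y" "mtrace Y = 0"
      have "mtrace (\<rho> * kron dA dB (1\<^sub>m dA) Y) = 0" using fnf Y unfolding filter_normal_form_def by blast
      then have "0 = (\<Sum>q<m. p q * (Re (mtrace (SA q * 1\<^sub>m dA)) * Re (mtrace (SB q * Y))))"
        using RT[OF herm_one Y(1)] by simp
      also have "\<dots> = (\<Sum>q<m. p q * Re (mtrace (SB q * Y)))"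
        using state_tr1[OF stA] tr_one[OF herm_carrier[OF HA]] by simp
      finally show "(\<Sum>q<m. p q * Re (mtrace (SB q * Y))) = 0" by simp
    qed
    then show ?thesis unfolding b_def eB_def .
  qed
  have aeA: "(\<Sum>i<NA. a q i * eA i) = 1 / dA" if "q < m" for q
    using side_facts(1)[OF onbA dA0 stA[OF that]] unfolding a_def eA_def NA_def .
  have beB: "(\<Sum>j<NB. b q j * eB j) = 1 / dB" if "q < m" for q
    using side_facts(1)[OF onbB dB0 stB[OF that]] unfolding b_def eB_def NB_def .
  have eA2: "(\<Sum>i<NA. (eA i)\<^sup>2) = 1 / dA"
    using side_facts(2)[OF onbA dA0 stA[OF m0]] unfolding eA_def NA_def .
  have eB2: "(\<Sum>j<NB. (eB j)\<^sup>2) = 1 / dB"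
    using side_facts(2)[OF onbB dB0 stB[OF m0]] unfolding eB_def NB_def .
  have aa2: "(\<Sum>i<NA. (a q i - eA i)\<^sup>2) \<le> 1 - 1 / dA" if "q < m" for q
    using side_facts(3)[OF onbA dA0 stA[OF that]] unfolding a_def eA_def NA_def .
  have bb2: "(\<Sum>j<NB. (b q j - eB j)\<^sup>2) \<le> 1 - 1 / dB" if "q < m" for q
    using side_facts(3)[OF onbB dB0 stB[OF that]] unfolding b_def eB_def NB_def .
  obtain U V where U: "orthogonal_mat NA U" and V: "orthogonal_mat NB V" and len: "length s = min NA NB"
    and Cent: "\<And>i j. i < NA \<Longrightarrow> j < NB \<Longrightarrow> C $$ (i, j) = (\<Sum>l<min NA NB. s ! l * U $$ (i, l) * V $$ (j, l))"
    using svd_entry[OF svd[folded C_def] Cc] by blast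
  have hmin: "h \<le> min NA NB" using hle unfolding NA_def NB_def min_sq .
  define x where "x k = (\<Sum>i<NA. U $$ (i, k) * eA i)" for k
  define y where "y k = (\<Sum>j<NB. V $$ (j, k) * eB j)" for k
  define al where "al q k = (\<Sum>i<NA. U $$ (i, k) * (a q i - eA i))" for q k
  define be where "be q k = (\<Sum>j<NB. V $$ (j, k) * (b q j - eB j))" for q k
  define \<tau> where "\<tau> k = (\<Sum>q<m. p q * (al q k * be q k))" for k
  define r where "r = 1 / sqrt (real dA * real dB)"
  define S where "S = sqrt (1 - 1 / real dA) * sqrt (1 - 1 / real dB)"
  have hNA: "h \<le> NA" and hNB: "h \<le> NB" using hmin by auto
  have Cij': "C $$ (i, j) = (\<Sum>q<m. p q * b q j * a q i)" if "i < NA" "j < NB" for i j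
    using Cij[OF that] by (simp add: mult_ac)
  have E: "s ! k = x k * y k + \<tau> k \<and> s ! k * x k = y k / dA \<and> s ! k * y k = x k / dB" if k: "k < h" for k
  proof -
    have kk: "k < min NA NB" using k hmin by simp
    note eqa = svd_eqs(1)[OF U V Cent kk] and eqb = svd_eqs(2)[OF U V Cent kk]
    have A: "(\<Sum>i<NA. U $$ (i, k) * a q i) = x k + al q k" for q
      unfolding x_def al_def sum.distrib[symmetric] by (rule sum.cong) (simp_all add: algebra_simps)
    have B: "(\<Sum>j<NB. V $$ (j, k) * b q j) = y k + be q k" for q
      unfolding y_def be_def sum.distrib[symmetric] by (rule sum.cong) (simp_all add: algebra_simps)
    have al0: "(\<Sum>q<m. p q * al q k) = 0"
    proof -
      have "(\<Sum>q<m. p q * al q k) = (\<Sum>i<NA. U $$ (i, k) * (\<Sum>q<m. p q * (a q i - eA i)))"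
        unfolding al_def by (rule wavg)
      also have "\<dots> = (\<Sum>i<NA. U $$ (i, k) * ((\<Sum>q<m. p q * a q i) - (\<Sum>q<m. p q) * eA i))"
        by (intro sum.cong refl) (simp add: right_diff_distrib sum_subtractf sum_distrib_right mult.assoc)
      also have "\<dots> = 0" by (rule sum.neutral) (simp add: abar psum)
      finally show ?thesis .
    qed
    have be0: "(\<Sum>q<m. p q * be q k) = 0"
    proof -
      have "(\<Sum>q<m. p q * be q k) = (\<Sum>j<NB. V $$ (j, k) * (\<Sum>q<m. p q * (b q j - eB j)))"
        unfolding be_def by (rule wavg)
      also have "\<dots> = (\<Sum>j<NB. V $$ (j, k) * ((\<Sum>q<m. p q * b q j) - (\<Sum>q<m. p q) * eB j))"
        by (intro sum.cong refl) (simp add: right_diff_distrib sum_subtractf sum_distrib_right mult.assoc)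
      also have "\<dots> = 0" by (rule sum.neutral) (simp add: bbar psum)
      finally show ?thesis .
    qed
    have "s ! k = (\<Sum>i<NA. U $$ (i, k) * (\<Sum>j<NB. C $$ (i, j) * V $$ (j, k)))"
    proof -
      have "(\<Sum>i<NA. U $$ (i, k) * (\<Sum>j<NB. C $$ (i, j) * V $$ (j, k))) = (\<Sum>i<NA. s ! k * (U $$ (i, k) * U $$ (i, k)))"
        using eqa by (simp add: mult_ac)
      also have "\<dots> = s ! k" using orth_cols[OF U, of k k] kk by (simp add: sum_distrib_left[symmetric])
      finally show ?thesis by simp
    qed
    also have "\<dots> = (\<Sum>i<NA. U $$ (i, k) * (\<Sum>j<NB. (\<Sum>q<m. p q * a q i * b q j) * V $$ (j, k)))"
      using Cij by simp
    also have "\<dots> = (\<Sum>q<m. p q * (\<Sum>i<NA. U $$ (i, k) * a q i) * (\<Sum>j<NB. V $$ (j, k) * b q j))"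
      by (rule triple)
    also have "\<dots> = (\<Sum>q<m. p q * (x k + al q k) * (y k + be q k))" by (simp add: A B)
    also have "\<dots> = (\<Sum>q<m. x k * y k * p q + x k * (p q * be q k) + y k * (p q * al q k) + p q * (al q k * be q k))"
      by (rule sum.cong) (simp_all add: algebra_simps)
    also have "\<dots> = x k * y k * (\<Sum>q<m. p q) + x k * (\<Sum>q<m. p q * be q k) + y k * (\<Sum>q<m. p q * al q k) + \<tau> k"
      unfolding \<tau>_def by (simp only: sum.distrib sum_distrib_left)
    also have "\<dots> = x k * y k + \<tau> k" using psum al0 be0 by simp
    finally have e1: "s ! k = x k * y k + \<tau> k" .
    have "s ! k * x k = (\<Sum>i<NA. eA i * (\<Sum>j<NB. C $$ (i, j) * V $$ (j, k)))"
    proof -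
      have "(\<Sum>i<NA. eA i * (\<Sum>j<NB. C $$ (i, j) * V $$ (j, k))) = (\<Sum>i<NA. s ! k * (U $$ (i, k) * eA i))"
        by (rule sum.cong[OF refl]) (simp add: eqa)
      also have "\<dots> = s ! k * x k" unfolding x_def by (simp only: sum_distrib_left)
      finally show ?thesis by simp
    qed
    also have "\<dots> = (\<Sum>i<NA. eA i * (\<Sum>j<NB. (\<Sum>q<m. p q * a q i * b q j) * V $$ (j, k)))"
      using Cij by simp
    also have "\<dots> = (\<Sum>q<m. p q * (\<Sum>i<NA. eA i * a q i) * (\<Sum>j<NB. V $$ (j, k) * b q j))"
      by (rule triple)
    also have "\<dots> = (\<Sum>q<m. p q * (\<Sum>j<NB. V $$ (j, k) * b q j) / dA)"
    proof (rule sum.cong[OF refl])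
      fix q assume "q \<in> {..<m}"
      then have "(\<Sum>i<NA. eA i * a q i) = 1 / dA" using aeA[of q] by (simp add: mult.commute)
      then show "p q * (\<Sum>i<NA. eA i * a q i) * (\<Sum>j<NB. V $$ (j, k) * b q j) = p q * (\<Sum>j<NB. V $$ (j, k) * b q j) / dA"
        by simp
    qed
    also have "\<dots> = (\<Sum>q<m. p q * (\<Sum>j<NB. V $$ (j, k) * b q j)) / dA"
      by (simp only: sum_divide_distrib)
    also have "(\<Sum>q<m. p q * (\<Sum>j<NB. V $$ (j, k) * b q j)) = (\<Sum>j<NB. V $$ (j, k) * (\<Sum>q<m. p q * b q j))"
      by (rule wavg)
    also have "\<dots> = y k"
      unfolding y_def by (rule sum.cong[OF refl]) (simp add: bbar)
    finally have e2: "s ! k * x k = y k / dA" .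
    have "s ! k * y k = (\<Sum>j<NB. eB j * (\<Sum>i<NA. C $$ (i, j) * U $$ (i, k)))"
    proof -
      have "(\<Sum>j<NB. eB j * (\<Sum>i<NA. C $$ (i, j) * U $$ (i, k))) = (\<Sum>j<NB. s ! k * (V $$ (j, k) * eB j))"
        by (rule sum.cong[OF refl]) (simp add: eqb)
      also have "\<dots> = s ! k * y k" unfolding y_def by (simp only: sum_distrib_left)
      finally show ?thesis by simp
    qed
    also have "\<dots> = (\<Sum>j<NB. eB j * (\<Sum>i<NA. (\<Sum>q<m. p q * b q j * a q i) * U $$ (i, k)))"
      using Cij' by simp
    also have "\<dots> = (\<Sum>q<m. p q * (\<Sum>j<NB. eB j * b q j) * (\<Sum>i<NA. U $$ (i, k) * a q i))"
      by (rule triple)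
    also have "\<dots> = (\<Sum>q<m. p q * (\<Sum>i<NA. U $$ (i, k) * a q i) / dB)"
    proof (rule sum.cong[OF refl])
      fix q assume "q \<in> {..<m}"
      then have "(\<Sum>j<NB. eB j * b q j) = 1 / dB" using beB[of q] by (simp add: mult.commute)
      then show "p q * (\<Sum>j<NB. eB j * b q j) * (\<Sum>i<NA. U $$ (i, k) * a q i) = p q * (\<Sum>i<NA. U $$ (i, k) * a q i) / dB"
        by simp
    qed
    also have "\<dots> = (\<Sum>q<m. p q * (\<Sum>i<NA. U $$ (i, k) * a q i)) / dB"
      by (simp only: sum_divide_distrib)
    also have "(\<Sum>q<m. p q * (\<Sum>i<NA. U $$ (i, k) * a q i)) = (\<Sum>i<NA. U $$ (i, k) * (\<Sum>q<m. p q * a q i))"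
      by (rule wavg)
    also have "\<dots> = x k"
      unfolding x_def by (rule sum.cong[OF refl]) (simp add: abar)
    finally have e3: "s ! k * y k = x k / dB" .
    show ?thesis using e1 e2 e3 by blast
  qed
  have Bx: "(\<Sum>k<h. (x k)\<^sup>2) \<le> 1 / dA"
    using bessel_part[OF U hNA, of eA] eA2 unfolding x_def by simp
  have By: "(\<Sum>k<h. (y k)\<^sup>2) \<le> 1 / dB"
    using bessel_part[OF V hNB, of eB] eB2 unfolding y_def by simp
  have Bal: "(\<Sum>k<h. (al q k)\<^sup>2) \<le> 1 - 1 / dA" if "q < m" for q
    using bessel_part[OF U hNA, of "\<lambda>i. a q i - eA i"] aa2[OF that] unfolding al_def by simp
  have Bbe: "(\<Sum>k<h. (be q k)\<^sup>2) \<le> 1 - 1 / dB" if "q < m" for q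
    using bessel_part[OF V hNB, of "\<lambda>j. b q j - eB j"] bb2[OF that] unfolding be_def by simp
  have sxy: "(\<Sum>k<h. \<bar>x k * y k\<bar>) \<le> r"
  proof -
    have "(\<Sum>k<h. \<bar>x k * y k\<bar>) \<le> sqrt (\<Sum>k<h. (x k)\<^sup>2) * sqrt (\<Sum>k<h. (y k)\<^sup>2)" by (rule cs_abs)
    also have "\<dots> \<le> sqrt (1 / dA) * sqrt (1 / dB)"
      using Bx By by (intro mult_mono) (auto simp: sum_nonneg)
    also have "\<dots> = r" unfolding r_def by (simp add: real_sqrt_mult real_sqrt_divide)
    finally show ?thesis .
  qed
  have iA: "1 / real dA \<le> 1" and iB: "1 / real dB \<le> 1" using dA dB by auto
  have sal: "(\<Sum>k<h. \<bar>al q k * be q k\<bar>) \<le> S" if "q < m" for q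
  proof -
    have "(\<Sum>k<h. \<bar>al q k * be q k\<bar>) \<le> sqrt (\<Sum>k<h. (al q k)\<^sup>2) * sqrt (\<Sum>k<h. (be q k)\<^sup>2)" by (rule cs_abs)
    also have "\<dots> \<le> S" unfolding S_def
      using Bal[OF that] Bbe[OF that] iA iB by (intro mult_mono) (auto simp: sum_nonneg)
    finally show ?thesis .
  qed
  have stau: "(\<Sum>k<h. \<bar>\<tau> k\<bar>) \<le> S"
  proof -
    have "(\<Sum>k<h. \<bar>\<tau> k\<bar>) \<le> (\<Sum>k<h. \<Sum>q<m. p q * \<bar>al q k * be q k\<bar>)"
    proof (rule sum_mono)
      fix k assume "k \<in> {..<h}"
      have "\<bar>\<tau> k\<bar> \<le> (\<Sum>q<m. \<bar>p q * (al q k * be q k)\<bar>)" unfolding \<tau>_def by (rule sum_abs)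
      also have "\<dots> = (\<Sum>q<m. p q * \<bar>al q k * be q k\<bar>)"
        by (rule sum.cong[OF refl]) (simp add: abs_mult p0)
      finally show "\<bar>\<tau> k\<bar> \<le> (\<Sum>q<m. p q * \<bar>al q k * be q k\<bar>)" .
    qed
    also have "\<dots> = (\<Sum>q<m. p q * (\<Sum>k<h. \<bar>al q k * be q k\<bar>))"
      by (subst sum.swap) (simp add: sum_distrib_left)
    also have "\<dots> \<le> (\<Sum>q<m. p q * S)"
      by (rule sum_mono) (simp add: mult_left_mono sal p0)
    also have "\<dots> = S" using psum by (simp add: sum_distrib_right[symmetric])
    finally show ?thesis .
  qed
  have r0: "r > 0" unfolding r_def using dA0 dB0 by simp
  have S0: "S \<ge> 0" unfolding S_def using dA0 dB0 by simp
  have S1: "S \<le> 1" unfolding S_def using dA0 dB0 by (intro mult_le_one) auto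
  have hsq: "sqrt (real dA * real dB) \<le> real h" using hge maxmin_prod by simp
  have pd1: "1 \<le> real dA * real dB" using mult_mono[of 1 "real dA" 1 "real dB"] dA dB by simp
  have sq1: "1 \<le> sqrt (real dA * real dB)" using pd1 by simp
  have h1: "h \<ge> 1" using hsq sq1 by linarith
  have hr: "1 \<le> real h * r" unfolding r_def using hsq sq1 by (simp add: field_simps)
  have Shr: "S \<le> real h * r" using S1 hr by linarith
  have snn: "\<And>k. k < h \<Longrightarrow> s ! k \<ge> 0"
  proof -
    fix k assume "k < h"
    then have "s ! k \<in> set s" using hmin len by simp
    then show "s ! k \<ge> 0" using svd unfolding singular_values_def by blast
  qed
  have main: "(\<Prod>k<h. s ! k) \<le> r * (S / (real h - 1)) ^ (h - 1)"
  proof (rule final_comb[OF r0 S0 h1 snn _ sxy stau])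
    fix k assume k: "k < h"
    show "s ! k = x k * y k + \<tau> k" using E[OF k] by blast
    assume ne: "s ! k \<noteq> r"
    have ek: "s ! k * x k = y k / real dA" "s ! k * y k = x k / real dB" using E[OF k] by auto
    show "x k * y k = 0"
      by (rule pair_lemma[OF snn[OF k] _ _ ek(1) ek(2)]) (use dA0 dB0 ne in \<open>auto simp: r_def\<close>)
  next
    show "S \<le> real h * r" by (rule Shr)
  qed
  have rhs: "1 / sqrt (real (max dA dB) * real (min dA dB)) *
    sqrt ((real (max dA dB) - 1) / (real (max dA dB) * (real h - 1)) *
          ((real (min dA dB) - 1) / (real (min dA dB) * (real h - 1)))) ^ (h - 1)
    = r * (S / (real h - 1)) ^ (h - 1)"
    unfolding r_def S_def by (rule rhs_eq[OF dA dB h1])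
  show ?thesis unfolding M_h_inf_def rhs by (rule main)
qed


end
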